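(* Let $G$ be the path graph with vertex set $V=\{0,\dots,n-1\}$ and edges $\{v,v+1\}$, let $2^k<n$, and let $T\in\mathcal{T}_k$. For $v\in V$ let $\lambda(v)$ denote the unique leaf $\lambda$ of $T$ with $v\in V(\lambda)$. Then $C(T)$ is a maximal covered set if and only if a) $T$ has exactly $2^k$ leaves, and b) for every vertex $v\in V$ with $v-1\notin C(T)$ and $v\notin C(T)$, we have $\lambda(v-1)=\lambda(v)$.
   Context: A search strategy for a tree $H$ is a rooted binary tree defined recursively: a single node is a search strategy for any $H$; otherwise the root is labeled with an edge $uv$ of $H$ and its two child subtrees are search strategies for the components $H_u,H_v$ of $H-uv$ containing $u,v$. Nodes get vertex sets: the root gets $V(H)$, the children of a root labeled $uv$ get $V(H_u),V(H_v)$, recursively; the leaf sets partition $V$. $C(T)$ is the set of $v$ with $V(\lambda)=\{v\}$ for some leaf $\lambda$. $\mathcal{T}_k$ is the set of search strategies for $G$ of height at most $k$. $C(T)$ is a maximal covered set if there is no $T'\in\mathcal{T}_k$ with $C(T)\subsetneq C(T')$. *)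

theory Defs
  imports Main
begin

definition path_edges :: "nat \<Rightarrow> nat set set" where
  "path_edges n = {{v, Suc v} | v. Suc v < n}"

text \<open>Vertex set of the component of H - uv containing u, where H has vertex set S
  and edges those of E inside S.\<close>
definition comp :: "nat set set \<Rightarrow> nat set \<Rightarrow> nat \<Rightarrow> nat \<Rightarrow> nat set" where
  "comp E S u v = {w \<in> S. (u, w) \<in> ({(x, y). x \<in> S \<and> y \<in> S \<and> {x, y} \<in> E \<and> {x, y} \<noteq> {u, v}})\<^sup>*}"

text \<open>Search strategies: rooted binary trees whose inner nodes are labelled by an edge uv;
  the left child corresponds to H_u, the right child to H_v.\<close>
datatype strat = Leaf | Node nat nat strat strat

fun is_strat :: "nat set set \<Rightarrow> nat set \<Rightarrow> strat \<Rightarrow> bool" where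
  "is_strat E S Leaf = True"
| "is_strat E S (Node u v L R) =
     (u \<in> S \<and> v \<in> S \<and> {u, v} \<in> E \<and>
      is_strat E (comp E S u v) L \<and> is_strat E (comp E S v u) R)"

fun height :: "strat \<Rightarrow> nat" where
  "height Leaf = 0"
| "height (Node u v L R) = Suc (max (height L) (height R))"

fun num_leaves :: "strat \<Rightarrow> nat" where
  "num_leaves Leaf = 1"
| "num_leaves (Node u v L R) = num_leaves L + num_leaves R"

fun leaf_sets :: "nat set set \<Rightarrow> nat set \<Rightarrow> strat \<Rightarrow> nat set set" where
  "leaf_sets E S Leaf = {S}"
| "leaf_sets E S (Node u v L R) = leaf_sets E (comp E S u v) L \<union> leaf_sets E (comp E S v u) R"

definition strategies :: "nat \<Rightarrow> nat \<Rightarrow> strat set" where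
  "strategies n k = {T. is_strat (path_edges n) {0..<n} T \<and> height T \<le> k}"

definition covered :: "nat \<Rightarrow> strat \<Rightarrow> nat set" where
  "covered n T = {v. {v} \<in> leaf_sets (path_edges n) {0..<n} T}"

definition maximal_covered :: "nat \<Rightarrow> nat \<Rightarrow> strat \<Rightarrow> bool" where
  "maximal_covered n k T \<longleftrightarrow> \<not> (\<exists>T' \<in> strategies n k. covered n T \<subset> covered n T')"

definition leaf_of :: "nat \<Rightarrow> strat \<Rightarrow> nat \<Rightarrow> nat set" where
  "leaf_of n T v = (THE X. X \<in> leaf_sets (path_edges n) {0..<n} T \<and> v \<in> X)"

end

theory Submission
  imports Defs
begin

fun bnd :: "strat \<Rightarrow> nat set" where
  "bnd Leaf = {}"
| "bnd (Node u v L R) = insert (max u v) (bnd L \<union> bnd R)"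

definition LS :: "nat \<Rightarrow> nat \<Rightarrow> nat set \<Rightarrow> nat set set" where
  "LS a b B = {{c..<d} | c d. c \<in> insert a B \<and> d \<in> insert b B \<and> c < d \<and> (\<forall>x\<in>B. \<not> (c < x \<and> x < d))}"

lemma path_edge_iff: "{x, y} \<in> path_edges n \<longleftrightarrow> (Suc x = y \<and> y < n) \<or> (Suc y = x \<and> x < n)"
  unfolding path_edges_def by (auto simp: doubleton_eq_iff)

lemma comp_left:
  assumes "a \<le> u" "Suc u < b" "b \<le> n"
  shows "comp (path_edges n) {a..<b} u (Suc u) = {a..<Suc u}"
proof
  let ?R = "{(x, y). x \<in> {a..<b} \<and> y \<in> {a..<b} \<and> {x, y} \<in> path_edges n \<and> {x, y} \<noteq> {u, Suc u}}"
  show "comp (path_edges n) {a..<b} u (Suc u) \<subseteq> {a..<Suc u}"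
  proof
    fix w assume "w \<in> comp (path_edges n) {a..<b} u (Suc u)"
    then have "(u, w) \<in> ?R\<^sup>*" unfolding comp_def by blast
    then show "w \<in> {a..<Suc u}"
    proof (induction rule: rtrancl_induct)
      case base then show ?case using assms by auto
    next
      case (step y z)
      then show ?case by (auto simp: path_edge_iff doubleton_eq_iff)
    qed
  qed
next
  let ?R = "{(x, y). x \<in> {a..<b} \<and> y \<in> {a..<b} \<and> {x, y} \<in> path_edges n \<and> {x, y} \<noteq> {u, Suc u}}"
  show "{a..<Suc u} \<subseteq> comp (path_edges n) {a..<b} u (Suc u)"
  proof
    fix w assume w: "w \<in> {a..<Suc u}"
    have "(u, u - d) \<in> ?R\<^sup>*" if "d \<le> u - a" for d
      using that
    proof (induction d)
      case 0 then show ?case by simp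
    next
      case (Suc d)
      then have "(u, u - d) \<in> ?R\<^sup>*" by simp
      moreover have "(u - d, u - Suc d) \<in> ?R"
        using Suc.prems assms by (auto simp: path_edge_iff doubleton_eq_iff)
      ultimately show ?case by (rule rtrancl_into_rtrancl)
    qed
    from this[of "u - w"] w assms show "w \<in> comp (path_edges n) {a..<b} u (Suc u)"
      unfolding comp_def by auto
  qed
qed

lemma comp_right:
  assumes "a \<le> u" "Suc u < b" "b \<le> n"
  shows "comp (path_edges n) {a..<b} (Suc u) u = {Suc u..<b}"
proof
  let ?R = "{(x, y). x \<in> {a..<b} \<and> y \<in> {a..<b} \<and> {x, y} \<in> path_edges n \<and> {x, y} \<noteq> {Suc u, u}}"
  show "comp (path_edges n) {a..<b} (Suc u) u \<subseteq> {Suc u..<b}"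
  proof
    fix w assume "w \<in> comp (path_edges n) {a..<b} (Suc u) u"
    then have "(Suc u, w) \<in> ?R\<^sup>*" unfolding comp_def by blast
    then show "w \<in> {Suc u..<b}"
    proof (induction rule: rtrancl_induct)
      case base then show ?case using assms by auto
    next
      case (step y z)
      then show ?case by (auto simp: path_edge_iff doubleton_eq_iff)
    qed
  qed
next
  let ?R = "{(x, y). x \<in> {a..<b} \<and> y \<in> {a..<b} \<and> {x, y} \<in> path_edges n \<and> {x, y} \<noteq> {Suc u, u}}"
  show "{Suc u..<b} \<subseteq> comp (path_edges n) {a..<b} (Suc u) u"
  proof
    fix w assume w: "w \<in> {Suc u..<b}"
    have "(Suc u, Suc u + d) \<in> ?R\<^sup>*" if "Suc u + d < b" for d
      using that
    proof (induction d)
      case 0 then show ?case by simp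
    next
      case (Suc d)
      then have "(Suc u, Suc u + d) \<in> ?R\<^sup>*" by simp
      moreover have "(Suc u + d, Suc u + Suc d) \<in> ?R"
        using Suc.prems assms by (auto simp: path_edge_iff doubleton_eq_iff)
      ultimately show ?case by (rule rtrancl_into_rtrancl)
    qed
    from this[of "w - Suc u"] w assms show "w \<in> comp (path_edges n) {a..<b} (Suc u) u"
      unfolding comp_def by auto
  qed
qed

lemma LS_empty: "a < b \<Longrightarrow> LS a b {} = {{a..<b}}"
  unfolding LS_def by auto

lemma LS_I: "c \<in> insert a B \<Longrightarrow> d \<in> insert b B \<Longrightarrow> c < d \<Longrightarrow> (\<forall>x\<in>B. \<not> (c < x \<and> x < d)) \<Longrightarrow> {c..<d} \<in> LS a b B"
  unfolding LS_def by blast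

lemma LS_E: "X \<in> LS a b B \<Longrightarrow> (\<And>c d. X = {c..<d} \<Longrightarrow> c \<in> insert a B \<Longrightarrow> d \<in> insert b B \<Longrightarrow> c < d \<Longrightarrow> (\<forall>x\<in>B. \<not> (c < x \<and> x < d)) \<Longrightarrow> P) \<Longrightarrow> P"
  unfolding LS_def by blast

lemma LS_split:
  assumes "a < m" "m < b" "BL \<subseteq> {a<..<m}" "BR \<subseteq> {m<..<b}"
  shows "LS a m BL \<union> LS m b BR = LS a b (insert m (BL \<union> BR))"
proof
  show "LS a m BL \<union> LS m b BR \<subseteq> LS a b (insert m (BL \<union> BR))"
  proof
    fix X assume "X \<in> LS a m BL \<union> LS m b BR"
    then show "X \<in> LS a b (insert m (BL \<union> BR))"
    proof
      assume "X \<in> LS a m BL"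
      then obtain c d where X: "X = {c..<d}" "c \<in> insert a BL" "d \<in> insert m BL" "c < d"
        "\<forall>x\<in>BL. \<not> (c < x \<and> x < d)" by (rule LS_E)
      have "d \<le> m" using X(3) assms by auto
      show ?thesis unfolding X(1)
      proof (rule LS_I)
        show "c \<in> insert a (insert m (BL \<union> BR))" using X by blast
        show "d \<in> insert b (insert m (BL \<union> BR))" using X by blast
        show "c < d" by fact
        show "\<forall>x\<in>insert m (BL \<union> BR). \<not> (c < x \<and> x < d)"
          using X(5) \<open>d \<le> m\<close> assms(4) by fastforce
      qed
    next
      assume "X \<in> LS m b BR"
      then obtain c d where X: "X = {c..<d}" "c \<in> insert m BR" "d \<in> insert b BR" "c < d"
        "\<forall>x\<in>BR. \<not> (c < x \<and> x < d)" by (rule LS_E)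
      have "m \<le> c" using X(2) assms by auto
      show ?thesis unfolding X(1)
      proof (rule LS_I)
        show "c \<in> insert a (insert m (BL \<union> BR))" using X by blast
        show "d \<in> insert b (insert m (BL \<union> BR))" using X by blast
        show "c < d" by fact
        show "\<forall>x\<in>insert m (BL \<union> BR). \<not> (c < x \<and> x < d)"
          using X(5) \<open>m \<le> c\<close> assms(3) by fastforce
      qed
    qed
  qed
next
  show "LS a b (insert m (BL \<union> BR)) \<subseteq> LS a m BL \<union> LS m b BR"
  proof
    fix X assume "X \<in> LS a b (insert m (BL \<union> BR))"
    then obtain c d where X: "X = {c..<d}" "c \<in> insert a (insert m (BL \<union> BR))"
      "d \<in> insert b (insert m (BL \<union> BR))" "c < d"
      "\<forall>x\<in>insert m (BL \<union> BR). \<not> (c < x \<and> x < d)" by (rule LS_E)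
    show "X \<in> LS a m BL \<union> LS m b BR"
    proof (cases "c < m")
      case True
      then have "d \<le> m" using X by auto
      have "X \<in> LS a m BL" unfolding X(1)
      proof (rule LS_I)
        show "c \<in> insert a BL" using X(2) True assms(4) by auto
        show "d \<in> insert m BL" using X(3) \<open>d \<le> m\<close> assms by auto
        show "c < d" by fact
        show "\<forall>x\<in>BL. \<not> (c < x \<and> x < d)" using X(5) by blast
      qed
      then show ?thesis by blast
    next
      case False
      have "X \<in> LS m b BR" unfolding X(1)
      proof (rule LS_I)
        show "c \<in> insert m BR" using X(2) False assms by auto
        show "d \<in> insert b BR" using X(3) X(4) False assms by auto
        show "c < d" by fact
        show "\<forall>x\<in>BR. \<not> (c < x \<and> x < d)" using X(5) by blast
      qed
      then show ?thesis by blast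
    qed
  qed
qed


lemma leaves_height: "num_leaves T \<le> 2 ^ height T"
proof (induction T)
  case Leaf then show ?case by simp
next
  case (Node u v L R)
  have "num_leaves L \<le> 2 ^ max (height L) (height R)"
    using Node.IH(1) by (meson le_trans max.cobounded1 one_le_numeral power_increasing)
  moreover have "num_leaves R \<le> 2 ^ max (height L) (height R)"
    using Node.IH(2) by (meson le_trans max.cobounded2 one_le_numeral power_increasing)
  ultimately show ?case by simp
qed

lemma combine:
  assumes "a < m" "m < b"
    and "bnd L \<subseteq> {a<..<m}" "card (bnd L) + 1 = num_leaves L" "XL = LS a m (bnd L)"
    and "bnd R \<subseteq> {m<..<b}" "card (bnd R) + 1 = num_leaves R" "XR = LS m b (bnd R)"
  shows "insert m (bnd L \<union> bnd R) \<subseteq> {a<..<b}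
     \<and> card (insert m (bnd L \<union> bnd R)) + 1 = num_leaves L + num_leaves R
     \<and> XL \<union> XR = LS a b (insert m (bnd L \<union> bnd R))"
proof (intro conjI)
  show "insert m (bnd L \<union> bnd R) \<subseteq> {a<..<b}" using assms by auto
  have fL: "finite (bnd L)" using assms(3) finite_subset by blast
  have fR: "finite (bnd R)" using assms(6) finite_subset by blast
  have d: "bnd L \<inter> bnd R = {}" using assms(3,6) by fastforce
  have nm: "m \<notin> bnd L \<union> bnd R" using assms(3,6) by auto
  have "card (insert m (bnd L \<union> bnd R)) = Suc (card (bnd L) + card (bnd R))"
    using fL fR d nm by (simp add: card_Un_disjoint)
  then show "card (insert m (bnd L \<union> bnd R)) + 1 = num_leaves L + num_leaves R"
    using assms(4,7) by simp
  show "XL \<union> XR = LS a b (insert m (bnd L \<union> bnd R))"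
    using LS_split[OF assms(1,2,3,6)] assms(5,8) by simp
qed

lemma sound:
  assumes "is_strat (path_edges n) {a..<b} T" "a < b" "b \<le> n"
  shows "bnd T \<subseteq> {a<..<b} \<and> card (bnd T) + 1 = num_leaves T
    \<and> leaf_sets (path_edges n) {a..<b} T = LS a b (bnd T)"
  using assms
proof (induction T arbitrary: a b)
  case Leaf
  then show ?case by (simp add: LS_empty)
next
  case (Node u v L R)
  have uv: "u \<in> {a..<b}" "v \<in> {a..<b}" "{u, v} \<in> path_edges n"
    and sL: "is_strat (path_edges n) (comp (path_edges n) {a..<b} u v) L"
    and sR: "is_strat (path_edges n) (comp (path_edges n) {a..<b} v u) R"
    using Node.prems by auto
  from uv(3) have "Suc u = v \<or> Suc v = u" by (auto simp: path_edge_iff)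
  then show ?case
  proof
    assume e: "Suc u = v"
    have c1: "comp (path_edges n) {a..<b} u v = {a..<v}"
      using comp_left[of a u b n] uv e Node.prems by auto
    have c2: "comp (path_edges n) {a..<b} v u = {v..<b}"
      using comp_right[of a u b n] uv e Node.prems by auto
    have m: "max u v = v" using e by simp
    have av: "a < v" "v < b" using uv e by auto
    have IL: "bnd L \<subseteq> {a<..<v} \<and> card (bnd L) + 1 = num_leaves L
      \<and> leaf_sets (path_edges n) {a..<v} L = LS a v (bnd L)"
      using Node.IH(1)[of a v] sL c1 av Node.prems by simp
    have IR: "bnd R \<subseteq> {v<..<b} \<and> card (bnd R) + 1 = num_leaves R
      \<and> leaf_sets (path_edges n) {v..<b} R = LS v b (bnd R)"
      using Node.IH(2)[of v b] sR c2 av Node.prems by simp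
    show ?thesis using combine[OF av, of L "leaf_sets (path_edges n) {a..<v} L" R
        "leaf_sets (path_edges n) {v..<b} R"] IL IR c1 c2 m by simp
  next
    assume e: "Suc v = u"
    have c1: "comp (path_edges n) {a..<b} v u = {a..<u}"
      using comp_left[of a v b n] uv e Node.prems by auto
    have c2: "comp (path_edges n) {a..<b} u v = {u..<b}"
      using comp_right[of a v b n] uv e Node.prems by auto
    have m: "max u v = u" using e by simp
    have av: "a < u" "u < b" using uv e by auto
    have IR: "bnd R \<subseteq> {a<..<u} \<and> card (bnd R) + 1 = num_leaves R
      \<and> leaf_sets (path_edges n) {a..<u} R = LS a u (bnd R)"
      using Node.IH(2)[of a u] sR c1 av Node.prems by simp
    have IL: "bnd L \<subseteq> {u<..<b} \<and> card (bnd L) + 1 = num_leaves L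
      \<and> leaf_sets (path_edges n) {u..<b} L = LS u b (bnd L)"
      using Node.IH(1)[of u b] sL c2 av Node.prems by simp
    have "insert u (bnd R \<union> bnd L) \<subseteq> {a<..<b}
     \<and> card (insert u (bnd R \<union> bnd L)) + 1 = num_leaves R + num_leaves L
     \<and> leaf_sets (path_edges n) {a..<u} R \<union> leaf_sets (path_edges n) {u..<b} L
        = LS a b (insert u (bnd R \<union> bnd L))"
      using combine[OF av, of R "leaf_sets (path_edges n) {a..<u} R" L
        "leaf_sets (path_edges n) {u..<b} L"] IL IR by simp
    then show ?thesis using c1 c2 m by (simp add: Un_commute add.commute)
  qed
qed

lemma exists_rank: "finite (B::nat set) \<Longrightarrow> j < card B \<Longrightarrow> \<exists>m\<in>B. card {x\<in>B. x < m} = j"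
proof (induction "card B" arbitrary: B)
  case 0 then show ?case by simp
next
  case (Suc N)
  then have ne: "B \<noteq> {}" by auto
  let ?M = "Max B"
  have M: "?M \<in> B" using Suc ne by simp
  have eq: "{x\<in>B. x < ?M} = B - {?M}" using Suc.prems by (auto simp: order.not_eq_order_implies_strict)
  have cM: "card (B - {?M}) = N" using Suc M by simp
  show ?case
  proof (cases "j = N")
    case True
    show ?thesis
    proof (rule bexI[OF _ M])
      show "card {x\<in>B. x < ?M} = j" using eq cM True by simp
    qed
  next
    case False
    then have "j < card (B - {?M})" using Suc cM by simp
    then obtain m where m: "m \<in> B - {?M}" "card {x \<in> B - {?M}. x < m} = j"
      using Suc.hyps(1)[of "B - {?M}"] Suc.prems cM by auto
    moreover have "m \<le> ?M" using m Suc.prems by simp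
    then have "{x \<in> B - {?M}. x < m} = {x\<in>B. x < m}" by auto
    ultimately show ?thesis by auto
  qed
qed

lemma complete:
  "B \<subseteq> {a<..<b} \<Longrightarrow> card B < 2^k \<Longrightarrow> b \<le> n \<Longrightarrow> a < b \<Longrightarrow>
   \<exists>T. is_strat (path_edges n) {a..<b} T \<and> height T \<le> k \<and> bnd T = B"
proof (induction k arbitrary: a b B)
  case 0
  then have "B = {}" using finite_subset[OF 0(1)] by simp
  then show ?case by (intro exI[of _ Leaf]) auto
next
  case (Suc k)
  have fB: "finite B" using finite_subset[OF Suc.prems(1)] by simp
  show ?case
  proof (cases "B = {}")
    case True then show ?thesis by (intro exI[of _ Leaf]) auto
  next
    case False
    then have "card B div 2 < card B" using fB by (simp add: card_gt_0_iff)
    then obtain m where m: "m \<in> B" "card {x\<in>B. x<m} = card B div 2"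
      using exists_rank fB by blast
    define BL where "BL = {x\<in>B. x<m}"
    define BR where "BR = {x\<in>B. m<x}"
    have Bs: "B = insert m (BL \<union> BR)" using m(1) unfolding BL_def BR_def by auto
    have fL: "finite BL" "finite BR" using fB unfolding BL_def BR_def by auto
    have cu: "card (BL \<union> BR) = card BL + card BR"
      by (rule card_Un_disjoint) (use fL in \<open>auto simp: BL_def BR_def\<close>)
    have "m \<notin> BL \<union> BR" unfolding BL_def BR_def by auto
    then have c1: "card B = Suc (card BL + card BR)"
      unfolding Bs using fL cu by simp
    have c2: "card BL = card B div 2" using m BL_def by simp
    have c3: "card B < 2 * 2 ^ k" using Suc.prems by simp
    have c4: "2 * (card B div 2) \<le> card B" "card B \<le> 2 * (card B div 2) + 1" by linarith+
    have cL: "card BL < 2 ^ k" using c1 c2 c3 c4 by linarith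
    have cR: "card BR < 2 ^ k" using c1 c2 c3 c4 by linarith
    have am: "a < m" "m < b" using m Suc.prems by auto
    have sL: "BL \<subseteq> {a<..<m}" "BR \<subseteq> {m<..<b}" using Suc.prems(1) unfolding BL_def BR_def by auto
    obtain TL where TL: "is_strat (path_edges n) {a..<m} TL" "height TL \<le> k" "bnd TL = BL"
      using Suc.IH[OF sL(1) cL] am Suc.prems by auto
    obtain TR where TR: "is_strat (path_edges n) {m..<b} TR" "height TR \<le> k" "bnd TR = BR"
      using Suc.IH[OF sL(2) cR] am Suc.prems by auto
    have sm: "Suc (m - 1) = m" using am by simp
    have c1: "comp (path_edges n) {a..<b} (m - 1) m = {a..<m}"
      using comp_left[of a "m - 1" b n] am Suc.prems sm by auto
    have c2: "comp (path_edges n) {a..<b} m (m - 1) = {m..<b}"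
      using comp_right[of a "m - 1" b n] am Suc.prems sm by auto
    have "is_strat (path_edges n) {a..<b} (Node (m - 1) m TL TR)"
      using TL TR c1 c2 am Suc.prems by (auto simp: path_edge_iff)
    moreover have "height (Node (m - 1) m TL TR) \<le> Suc k" using TL TR by simp
    moreover have "bnd (Node (m - 1) m TL TR) = B" using TL TR Bs am by (simp add: max_def)
    ultimately show ?thesis by blast
  qed
qed


lemma LS_single: "{v} \<in> LS a b B \<longleftrightarrow> v \<in> insert a B \<and> Suc v \<in> insert b B"
proof
  assume "{v} \<in> LS a b B"
  then obtain c d where X: "{v} = {c..<d}" "c \<in> insert a B" "d \<in> insert b B" "c < d"
    by (rule LS_E)
  have "c \<in> {c..<d}" using X(4) by simp
  then have cv: "c = v" using X(1) by blast
  have "d = Suc v"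
  proof (rule ccontr)
    assume "d \<noteq> Suc v"
    then have "Suc v \<in> {c..<d}" using cv X(4) by simp
    then show False by (metis X(1) singletonD n_not_Suc_n)
  qed
  then show "v \<in> insert a B \<and> Suc v \<in> insert b B" using cv X by simp
next
  assume a: "v \<in> insert a B \<and> Suc v \<in> insert b B"
  have "{v..<Suc v} \<in> LS a b B" by (rule LS_I) (use a in auto)
  then show "{v} \<in> LS a b B" by simp
qed

lemma LS_ex1:
  assumes B: "B \<subseteq> {a<..<b}" and w: "a \<le> w" "w < b"
  shows "\<exists>!X. X \<in> LS a b B \<and> w \<in> X"
proof
  have fB: "finite B" using finite_subset[OF B] by simp
  define c where "c = Max {x \<in> insert a B. x \<le> w}"
  define d where "d = Min {x \<in> insert b B. w < x}"
  have f1: "finite {x \<in> insert a B. x \<le> w}" using fB by simp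
  have f2: "finite {x \<in> insert b B. w < x}" using fB by simp
  have n1: "a \<in> {x \<in> insert a B. x \<le> w}" using w by simp
  have n2: "b \<in> {x \<in> insert b B. w < x}" using w by simp
  have c0: "c \<in> {x \<in> insert a B. x \<le> w}" unfolding c_def by (rule Max_in[OF f1]) (use n1 in blast)
  have d0: "d \<in> {x \<in> insert b B. w < x}" unfolding d_def by (rule Min_in[OF f2]) (use n2 in blast)
  have c: "c \<in> insert a B" "c \<le> w" using c0 by auto
  have d: "d \<in> insert b B" "w < d" using d0 by auto
  have btw: "\<forall>x\<in>B. \<not> (c < x \<and> x < d)"
  proof (intro ballI notI)
    fix x assume x: "x \<in> B" "c < x \<and> x < d"
    show False
    proof (cases "x \<le> w")
      case True
      then have "x \<le> c" unfolding c_def using f1 x(1) by (intro Max_ge) auto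
      then show False using x by simp
    next
      case False
      then have "d \<le> x" unfolding d_def using f2 x(1) by (intro Min_le) auto
      then show False using x by simp
    qed
  qed
  have "{c..<d} \<in> LS a b B" by (rule LS_I) (use c d btw in auto)
  then show "{c..<d} \<in> LS a b B \<and> w \<in> {c..<d}" using c d by simp
  fix X assume X: "X \<in> LS a b B \<and> w \<in> X"
  show "X = {c..<d}"
  proof -
    obtain c' d' where X': "X = {c'..<d'}" "c' \<in> insert a B" "d' \<in> insert b B" "c' < d'"
      "\<forall>x\<in>B. \<not> (c' < x \<and> x < d')" using X by (auto elim: LS_E)
    have wX: "c' \<le> w" "w < d'" using X X'(1) by auto
    have "c' = c"
    proof (rule ccontr)
      assume "c' \<noteq> c"
      then consider "c' < c" | "c < c'" by linarith
      then show False
      proof cases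
        case 1
        then have "c \<in> B" using c X'(2) B by auto
        then show False using X'(5) 1 c d wX by auto
      next
        case 2
        then have "c' \<in> B" using c X'(2) B by auto
        then show False using btw 2 c d wX by auto
      qed
    qed
    moreover have "d' = d"
    proof (rule ccontr)
      assume "d' \<noteq> d"
      then consider "d' < d" | "d < d'" by linarith
      then show False
      proof cases
        case 1
        then have "d' \<in> B" using d X'(3) B by auto
        then show False using btw 1 c d wX by auto
      next
        case 2
        then have "d \<in> B" using d X'(3) B by auto
        then show False using X'(5) 2 c d wX by auto
      qed
    qed
    ultimately show ?thesis using X'(1) by simp
  qed
qed

lemma leaf_same:
  assumes B: "B \<subseteq> {a<..<b}" and v: "a < v" "v < b"
  shows "(THE X. X \<in> LS a b B \<and> v - 1 \<in> X) = (THE X. X \<in> LS a b B \<and> v \<in> X) \<longleftrightarrow> v \<notin> B"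
proof -
  have e1: "\<exists>!X. X \<in> LS a b B \<and> v - 1 \<in> X" using LS_ex1[OF B, of "v - 1"] v by simp
  have e2: "\<exists>!X. X \<in> LS a b B \<and> v \<in> X" using LS_ex1[OF B, of v] v by simp
  define X1 where "X1 = (THE X. X \<in> LS a b B \<and> v - 1 \<in> X)"
  have X1: "X1 \<in> LS a b B" "v - 1 \<in> X1" using theI'[OF e1] unfolding X1_def by auto
  obtain c d where X1': "X1 = {c..<d}" "c \<in> insert a B" "d \<in> insert b B" "c < d"
      "\<forall>x\<in>B. \<not> (c < x \<and> x < d)" using X1(1) by (rule LS_E)
  show ?thesis unfolding X1_def[symmetric]
  proof
    assume eq: "X1 = (THE X. X \<in> LS a b B \<and> v \<in> X)"
    have "v \<in> X1" using theI'[OF e2] eq by simp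
    then show "v \<notin> B" using X1' X1(2) v by auto
  next
    assume nB: "v \<notin> B"
    have "d \<noteq> v" using X1'(3) nB v by auto
    then have "v \<in> X1" using X1' X1(2) v by auto
    then show "X1 = (THE X. X \<in> LS a b B \<and> v \<in> X)"
      using the1_equality[OF e2] X1 by simp
  qed
qed

definition cov :: "nat \<Rightarrow> nat set \<Rightarrow> nat set" where
  "cov n B = {v. v \<in> insert 0 B \<and> Suc v \<in> insert n B}"


lemma cov_mono: "B \<subseteq> B' \<Longrightarrow> cov n B \<subseteq> cov n B'"
  unfolding cov_def by auto

lemma comb:
  fixes B :: "nat set"
  assumes B: "B \<subseteq> {0<..<n}" and cB: "card B < 2^k" and kn: "2^k < n"
  shows "(\<not>(\<exists>B'. B' \<subseteq> {0<..<n} \<and> card B' < 2^k \<and> cov n B \<subset> cov n B')) \<longleftrightarrow>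
         (card B + 1 = 2^k \<and> (\<forall>v. 0<v \<longrightarrow> v<n \<longrightarrow> v-1 \<notin> cov n B \<longrightarrow> v \<notin> cov n B \<longrightarrow> v \<notin> B))"
proof
  have fB: "finite B" using finite_subset[OF B] by simp
  assume nm: "\<not>(\<exists>B'. B' \<subseteq> {0<..<n} \<and> card B' < 2^k \<and> cov n B \<subset> cov n B')"
  show "card B + 1 = 2^k \<and> (\<forall>v. 0<v \<longrightarrow> v<n \<longrightarrow> v-1 \<notin> cov n B \<longrightarrow> v \<notin> cov n B \<longrightarrow> v \<notin> B)"
  proof (intro conjI allI impI)
    show "card B + 1 = 2^k"
    proof (rule ccontr)
      assume "card B + 1 \<noteq> 2^k"
      then have cb: "card B + 1 < 2^k" using cB by simp
      have "card B < card {0<..<n}" using cb kn by simp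
      then have "\<not> {0<..<n} \<subseteq> B" using card_mono[OF fB] by (meson leD)
      then obtain x where x: "0 < x \<and> x < n \<and> x \<notin> B" by (auto simp: subset_iff)
      define x0 where "x0 = (LEAST x. 0 < x \<and> x < n \<and> x \<notin> B)"
      have x0: "0 < x0 \<and> x0 < n \<and> x0 \<notin> B" unfolding x0_def by (rule LeastI[of _ x]) (rule x)
      have pre: "x0 - 1 \<in> insert 0 B"
      proof (cases "x0 - 1 = 0")
        case False
        have "\<not> (0 < x0 - 1 \<and> x0 - 1 < n \<and> x0 - 1 \<notin> B)"
          unfolding x0_def by (rule not_less_Least) (use x0 x0_def in simp)
        then show ?thesis using False x0 by auto
      qed simp
      define B' where "B' = insert x0 B"
      have B'1: "B' \<subseteq> {0<..<n}" using B x0 unfolding B'_def by auto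
      have B'2: "card B' < 2^k" using cb x0 fB unfolding B'_def by simp
      have "cov n B \<subseteq> cov n B'" unfolding B'_def by (rule cov_mono) auto
      moreover have "x0 - 1 \<in> cov n B'" using pre x0 unfolding cov_def B'_def by auto
      moreover have "x0 - 1 \<notin> cov n B" using x0 unfolding cov_def by auto
      ultimately have "cov n B \<subset> cov n B'" by blast
      then show False using nm B'1 B'2 by blast
    qed
  next
    fix v assume v: "0<v" "v<n" "v-1 \<notin> cov n B" "v \<notin> cov n B"
    show "v \<notin> B"
    proof
      assume vB: "v \<in> B"
      have a1: "v - 1 \<notin> insert 0 B" using v(1,3) vB unfolding cov_def by auto
      have a2: "Suc v \<notin> insert n B" using v(4) vB unfolding cov_def by auto
      define c where "c = Max {x \<in> insert 0 B. x < v}"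
      have f1: "finite {x \<in> insert 0 B. x < v}" using fB by simp
      have c0: "c \<in> {x \<in> insert 0 B. x < v}" unfolding c_def
        by (rule Max_in[OF f1]) (use v in blast)
      have c: "c \<in> insert 0 B" "c < v" using c0 by auto
      have "c \<noteq> v - 1" using c a1 by auto
      then have sc: "Suc c < v" using c by simp
      have scB: "Suc c \<notin> B"
      proof
        assume "Suc c \<in> B"
        then have mem: "Suc c \<in> {x \<in> insert 0 B. x < v}" using sc by simp
        from Max_ge[OF f1 mem] have "Suc c \<le> c" unfolding c_def[symmetric] .
        then show False by simp
      qed
      define B' where "B' = insert (Suc c) (B - {v})"
      have B'1: "B' \<subseteq> {0<..<n}" using B sc v unfolding B'_def by auto
      have cpos: "card B > 0" using fB vB by (simp add: card_gt_0_iff) blast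
      have "card B' = Suc (card (B - {v}))"
        unfolding B'_def using fB scB by (simp add: card_insert_disjoint)
      also have "card (B - {v}) = card B - 1" using fB vB by (simp add: card_Diff_singleton)
      finally have "card B' = card B" using cpos by simp
      then have B'2: "card B' < 2^k" using cB by simp
      have "cov n B \<subseteq> cov n B'"
      proof
        fix w assume w: "w \<in> cov n B"
        have "w \<noteq> v" using w v by auto
        moreover have "Suc w \<noteq> v" using w v by auto
        ultimately show "w \<in> cov n B'" using w unfolding cov_def B'_def by auto
      qed
      moreover have "c \<in> cov n B'" using c unfolding cov_def B'_def by auto
      moreover have "c \<notin> cov n B" using scB sc v unfolding cov_def by auto
      ultimately have "cov n B \<subset> cov n B'" by blast
      then show False using nm B'1 B'2 by blast
    qed
  qed
next
  assume R: "card B + 1 = 2^k \<and> (\<forall>v. 0<v \<longrightarrow> v<n \<longrightarrow> v-1 \<notin> cov n B \<longrightarrow> v \<notin> cov n B \<longrightarrow> v \<notin> B)"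
  show "\<not>(\<exists>B'. B' \<subseteq> {0<..<n} \<and> card B' < 2^k \<and> cov n B \<subset> cov n B')"
  proof
    assume "\<exists>B'. B' \<subseteq> {0<..<n} \<and> card B' < 2^k \<and> cov n B \<subset> cov n B'"
    then obtain B' where B': "B' \<subseteq> {0<..<n}" "card B' < 2^k" "cov n B \<subset> cov n B'" by blast
    define N where "N C = {v. 0<v \<and> v<n \<and> (v \<in> C \<or> v - 1 \<in> C)}" for C
    have NB': "N (cov n B') \<subseteq> B'"
    proof
      fix v assume "v \<in> N (cov n B')"
      then have v: "0 < v" "v < n" "v \<in> cov n B' \<or> v - 1 \<in> cov n B'" unfolding N_def by auto
      from v(3) show "v \<in> B'"
      proof
        assume "v \<in> cov n B'" then show ?thesis using v unfolding cov_def by auto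
      next
        assume "v - 1 \<in> cov n B'" then show ?thesis using v unfolding cov_def by auto
      qed
    qed
    have "B \<subseteq> N (cov n B)"
    proof
      fix v assume v: "v \<in> B"
      then have "0 < v" "v < n" using B by auto
      then show "v \<in> N (cov n B)" using R v unfolding N_def by blast
    qed
    moreover have "N (cov n B) \<subseteq> N (cov n B')" using B'(3) unfolding N_def by auto
    ultimately have sub: "B \<subseteq> B'" using NB' by blast
    have "B \<noteq> B'" using B'(3) by auto
    then have "B \<subset> B'" using sub by blast
    moreover have "finite B'" using finite_subset[OF B'(1)] by simp
    ultimately have "card B < card B'" by (rule psubset_card_mono[rotated])
    then show False using R B'(2) by simp
  qed
qed

theorem lemmaA2:
  fixes n k :: nat and T :: strat
  assumes "2 ^ k < n"
    and "T \<in> strategies n k"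
  shows "maximal_covered n k T \<longleftrightarrow>
           (num_leaves T = 2 ^ k \<and>
            (\<forall>v \<in> {0..<n}. 0 < v \<longrightarrow> v - 1 \<notin> covered n T \<longrightarrow> v \<notin> covered n T \<longrightarrow>
               leaf_of n T (v - 1) = leaf_of n T v))"
proof -
  define B where "B = bnd T"
  have st: "is_strat (path_edges n) {0..<n} T" "height T \<le> k"
    using assms(2) by (auto simp: strategies_def)
  have n0: "0 < n" using assms(1) by (metis gr_zeroI less_nat_zero_code)
  have S: "B \<subseteq> {0<..<n}" "card B + 1 = num_leaves T" "leaf_sets (path_edges n) {0..<n} T = LS 0 n B"
    using sound[OF st(1) n0 order_refl] unfolding B_def by auto
  have "num_leaves T \<le> 2 ^ k"
    using leaves_height[of T] st(2) by (meson le_trans one_le_numeral power_increasing)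
  then have cB: "card B < 2 ^ k" using S(2) by simp
  have covT: "covered n T = cov n B"
    unfolding covered_def cov_def S(3) LS_single ..
  have covS: "bnd T' \<subseteq> {0<..<n} \<and> card (bnd T') < 2^k \<and> covered n T' = cov n (bnd T')"
    if "T' \<in> strategies n k" for T'
  proof -
    have st': "is_strat (path_edges n) {0..<n} T'" "height T' \<le> k"
      using that by (auto simp: strategies_def)
    have S': "bnd T' \<subseteq> {0<..<n}" "card (bnd T') + 1 = num_leaves T'"
      "leaf_sets (path_edges n) {0..<n} T' = LS 0 n (bnd T')"
      using sound[OF st'(1) n0 order_refl] by auto
    have "num_leaves T' \<le> 2 ^ k"
      using leaves_height[of T'] st'(2) by (meson le_trans one_le_numeral power_increasing)
    then show ?thesis using S' unfolding covered_def cov_def S'(3) LS_single by simp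
  qed
  have maxeq: "maximal_covered n k T \<longleftrightarrow>
      \<not>(\<exists>B'. B' \<subseteq> {0<..<n} \<and> card B' < 2^k \<and> cov n B \<subset> cov n B')"
  proof
    assume m: "maximal_covered n k T"
    show "\<not>(\<exists>B'. B' \<subseteq> {0<..<n} \<and> card B' < 2^k \<and> cov n B \<subset> cov n B')"
    proof
      assume "\<exists>B'. B' \<subseteq> {0<..<n} \<and> card B' < 2^k \<and> cov n B \<subset> cov n B'"
      then obtain B' where B': "B' \<subseteq> {0<..<n}" "card B' < 2^k" "cov n B \<subset> cov n B'" by blast
      obtain T' where T': "is_strat (path_edges n) {0..<n} T'" "height T' \<le> k" "bnd T' = B'"
        using complete[OF B'(1,2) order_refl n0] by blast
      have Ts: "T' \<in> strategies n k" using T' by (simp add: strategies_def)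
      moreover have "covered n T \<subset> covered n T'" using covS[OF Ts] T' B' covT by simp
      ultimately show False using m unfolding maximal_covered_def by blast
    qed
  next
    assume nm: "\<not>(\<exists>B'. B' \<subseteq> {0<..<n} \<and> card B' < 2^k \<and> cov n B \<subset> cov n B')"
    show "maximal_covered n k T"
      unfolding maximal_covered_def
    proof
      assume "\<exists>T'\<in>strategies n k. covered n T \<subset> covered n T'"
      then obtain T' where "T' \<in> strategies n k" "covered n T \<subset> covered n T'" by blast
      then show False using covS nm covT by metis
    qed
  qed
  have leafeq: "leaf_of n T (v - 1) = leaf_of n T v \<longleftrightarrow> v \<notin> B" if "0 < v" "v < n" for v
    unfolding leaf_of_def S(3) using leaf_same[OF S(1) that] .
  have "(\<forall>v \<in> {0..<n}. 0 < v \<longrightarrow> v - 1 \<notin> covered n T \<longrightarrow> v \<notin> covered n T \<longrightarrow>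
               leaf_of n T (v - 1) = leaf_of n T v) \<longleftrightarrow>
        (\<forall>v. 0<v \<longrightarrow> v<n \<longrightarrow> v-1 \<notin> cov n B \<longrightarrow> v \<notin> cov n B \<longrightarrow> v \<notin> B)"
    using leafeq covT by auto
  moreover have "num_leaves T = 2 ^ k \<longleftrightarrow> card B + 1 = 2 ^ k" using S(2) by simp
  ultimately show ?thesis using maxeq comb[OF S(1) cB assms(1)] by simp
qed


end
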